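(* Let $r_2\geq 3$ be an odd integer. Then there is no graph with parameters $(r_2,r_3)$ for any integer $r_3$ with $\binom{r_2-1}{2}<r_3<\binom{r_2}{2}$. Moreover, $K_{r_2+1}$ has parameters $(r_2,\binom{r_2}{2})$ and $K_{r_2}\square K_2$ has parameters $(r_2,\binom{r_2-1}{2})$.
   Context: All graphs are finite, simple and undirected. The $K_3$-degree of a vertex $v$ is the number of triangles containing $v$. A graph $G$ has parameters $(r_2,r_3)$ if every vertex has degree $r_2$ and every vertex has $K_3$-degree $r_3$. $K_n$ is the complete graph on $n$ vertices. The Cartesian product $G_1\square G_2$ has vertex set $V(G_1)\times V(G_2)$, with $(u,v)$ and $(u',v')$ adjacent iff either $u=u'$ and $vv'\in E(G_2)$, or $v=v'$ and $uu'\in E(G_1)$. *)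

theory Defs
  imports Main
begin

definition simple_graph :: "'a set \<Rightarrow> 'a set set \<Rightarrow> bool" where
  "simple_graph V E \<longleftrightarrow> finite V \<and> (\<forall>e\<in>E. e \<subseteq> V \<and> card e = 2)"

definition degree :: "'a set \<Rightarrow> 'a set set \<Rightarrow> 'a \<Rightarrow> nat" where
  "degree V E v = card {u \<in> V. {u, v} \<in> E}"

definition triangles :: "'a set \<Rightarrow> 'a set set \<Rightarrow> 'a set set" where
  "triangles V E = {T. T \<subseteq> V \<and> card T = 3 \<and> (\<forall>x\<in>T. \<forall>y\<in>T. x \<noteq> y \<longrightarrow> {x, y} \<in> E)}"

definition K3_degree :: "'a set \<Rightarrow> 'a set set \<Rightarrow> 'a \<Rightarrow> nat" where
  "K3_degree V E v = card {T \<in> triangles V E. v \<in> T}"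

definition has_params :: "'a set \<Rightarrow> 'a set set \<Rightarrow> nat \<Rightarrow> nat \<Rightarrow> bool" where
  "has_params V E r2 r3 \<longleftrightarrow> simple_graph V E \<and>
     (\<forall>v\<in>V. degree V E v = r2 \<and> K3_degree V E v = r3)"

definition complete_graph_V :: "nat \<Rightarrow> nat set" where
  "complete_graph_V n = {0..<n}"

definition complete_graph_E :: "nat \<Rightarrow> nat set set" where
  "complete_graph_E n = {{i, j} | i j. i < n \<and> j < n \<and> i \<noteq> j}"

definition cart_V :: "'a set \<Rightarrow> 'b set \<Rightarrow> ('a \<times> 'b) set" where
  "cart_V V1 V2 = V1 \<times> V2"

definition cart_E :: "'a set \<Rightarrow> 'a set set \<Rightarrow> 'b set \<Rightarrow> 'b set set \<Rightarrow> ('a \<times> 'b) set set" where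
  "cart_E V1 E1 V2 E2 =
     {{(u, v), (u, v')} | u v v'. u \<in> V1 \<and> {v, v'} \<in> E2} \<union>
     {{(u, v), (u', v)} | u u' v. v \<in> V2 \<and> {u, u'} \<in> E1}"

end

theory Submission
  imports Defs
begin


definition nbr :: "'a set \<Rightarrow> 'a set set \<Rightarrow> 'a \<Rightarrow> 'a set" where
  "nbr V E v = {u\<in>V. {u,v}\<in>E}"

definition nd :: "'a set \<Rightarrow> 'a set set \<Rightarrow> 'a \<Rightarrow> 'a \<Rightarrow> nat" where
  "nd V E v y = card {z\<in>nbr V E v. z \<noteq> y \<and> {y,z} \<notin> E}"

lemma sg_edge:
  assumes "simple_graph V E" "{a,b} \<in> E"
  shows "a \<noteq> b" "a \<in> V" "b \<in> V"
proof -
  have "{a,b} \<subseteq> V \<and> card {a,b} = 2" using assms unfolding simple_graph_def by blast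
  then show "a \<noteq> b" "a \<in> V" "b \<in> V" by (auto split: if_splits)
qed

lemma fin_nbr: "simple_graph V E \<Longrightarrow> finite (nbr V E v)"
  unfolding simple_graph_def nbr_def by auto

lemma nbr_not_self: "simple_graph V E \<Longrightarrow> v \<notin> nbr V E v"
  unfolding nbr_def using sg_edge(1)[of V E v v] by auto

lemma card_split: "finite S \<Longrightarrow> card {z\<in>S. P z} + card {z\<in>S. \<not> P z} = card S"
proof -
  assume "finite S"
  have "S = {z\<in>S. P z} \<union> {z\<in>S. \<not> P z}" by auto
  then show ?thesis using \<open>finite S\<close>
    by (metis (no_types, lifting) card_Un_disjoint disjoint_iff finite_Un mem_Collect_eq)
qed

lemma tri_count:
  assumes sg: "simple_graph V E" and v: "v \<in> V"
  shows "2 * K3_degree V E v = (\<Sum>y\<in>nbr V E v. card {z\<in>nbr V E v. z \<noteq> y \<and> {y,z} \<in> E})"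
proof -
  let ?N = "nbr V E v"
  define P where "P = {(y,z). y \<in> ?N \<and> z \<in> ?N \<and> z \<noteq> y \<and> {y,z} \<in> E}"
  define f where "f = (\<lambda>(y::'a,z::'a). {v,y,z})"
  have finN: "finite ?N" using fin_nbr[OF sg] .
  have vN: "v \<notin> ?N" using nbr_not_self[OF sg] .
  have finP: "finite P" unfolding P_def
    by (rule finite_subset[of _ "?N \<times> ?N"]) (auto simp: finN)
  have cardP: "card P = (\<Sum>y\<in>?N. card {z\<in>?N. z \<noteq> y \<and> {y,z} \<in> E})"
  proof -
    have "P = (SIGMA y:?N. {z\<in>?N. z \<noteq> y \<and> {y,z} \<in> E})" unfolding P_def by auto
    then show ?thesis using finN by (simp add: card_SigmaI)
  qed
  have img: "f ` P = {T \<in> triangles V E. v \<in> T}"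
  proof
    show "f ` P \<subseteq> {T \<in> triangles V E. v \<in> T}"
    proof
      fix T assume "T \<in> f ` P"
      then obtain y z where yz: "y \<in> ?N" "z \<in> ?N" "z \<noteq> y" "{y,z} \<in> E" and T: "T = {v,y,z}"
        unfolding P_def f_def by auto
      have "y \<noteq> v" "z \<noteq> v" using yz vN by auto
      moreover have "{y,v} \<in> E" "{z,v} \<in> E" "y \<in> V" "z \<in> V" using yz unfolding nbr_def by auto
      ultimately have e: "{v,y} \<in> E" "{y,v} \<in> E" "{v,z} \<in> E" "{z,v} \<in> E" "{y,z} \<in> E" "{z,y} \<in> E"
        using yz(4) by (simp_all add: insert_commute)
      have Tsub: "{v,y,z} \<subseteq> V" using v \<open>y \<in> V\<close> \<open>z \<in> V\<close> by auto
      have Tc: "card {v,y,z} = 3" using \<open>y \<noteq> v\<close> \<open>z \<noteq> v\<close> yz(3) by (simp add: card_insert_if)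
      have Ta: "\<forall>a\<in>{v,y,z}. \<forall>b\<in>{v,y,z}. a \<noteq> b \<longrightarrow> {a,b} \<in> E" using e by blast
      show "T \<in> {T \<in> triangles V E. v \<in> T}"
        unfolding triangles_def T using Tsub Tc Ta by blast
    qed
  next
    show "{T \<in> triangles V E. v \<in> T} \<subseteq> f ` P"
    proof
      fix T assume T: "T \<in> {T \<in> triangles V E. v \<in> T}"
      then have c3: "card T = 3" and vT: "v \<in> T" and TV: "T \<subseteq> V"
        and adj: "\<forall>x\<in>T. \<forall>y\<in>T. x \<noteq> y \<longrightarrow> {x, y} \<in> E"
        unfolding triangles_def by auto
      have "card (T - {v}) = 2" using c3 vT
        by (metis card.infinite card_Diff_singleton diff_Suc_1 numeral_3_eq_3 numeral_2_eq_2 zero_neq_numeral)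
      then obtain y z where yz: "T - {v} = {y,z}" "y \<noteq> z" by (auto simp: card_2_iff)
      have T': "T = {v,y,z}" using yz vT by auto
      have "y \<in> T" "z \<in> T" "y \<noteq> v" "z \<noteq> v" using yz by auto
      then have "{y,v} \<in> E" "{z,v} \<in> E" "{y,z} \<in> E" using adj yz(2) vT by auto
      then have "(y,z) \<in> P" unfolding P_def nbr_def using TV \<open>y \<in> T\<close> \<open>z \<in> T\<close> yz(2) by auto
      then show "T \<in> f ` P" unfolding f_def T' by force
    qed
  qed
  have fib: "card {p\<in>P. f p = T} = 2" if TfP: "T \<in> f ` P" for T
  proof -
    obtain p where "p \<in> P" "T = f p" using TfP by blast
    then obtain y z where yzP: "(y,z) \<in> P" and T: "T = {v,y,z}" unfolding f_def by (cases p) auto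
    have yz: "y \<in> ?N" "z \<in> ?N" "z \<noteq> y" "{y,z} \<in> E" using yzP unfolding P_def by auto
    have "{p\<in>P. f p = T} = {(y,z),(z,y)}"
    proof
      show "{(y,z),(z,y)} \<subseteq> {p\<in>P. f p = T}" using yz unfolding P_def f_def T
        by (auto simp: insert_commute)
      show "{p\<in>P. f p = T} \<subseteq> {(y,z),(z,y)}"
      proof
        fix p assume "p \<in> {p\<in>P. f p = T}"
        then obtain a b where p: "p = (a,b)" "a \<in> ?N" "b \<in> ?N" "{v,a,b} = {v,y,z}" "a \<noteq> b"
          unfolding P_def f_def T by auto
        have "a \<noteq> v" "b \<noteq> v" "y \<noteq> v" "z \<noteq> v" using p yz vN by auto
        have "{a,b} = {v,a,b} - {v}" using \<open>a \<noteq> v\<close> \<open>b \<noteq> v\<close> by auto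
        also have "\<dots> = {v,y,z} - {v}" using p(4) by simp
        also have "\<dots> = {y,z}" using \<open>y \<noteq> v\<close> \<open>z \<noteq> v\<close> by auto
        finally have "{a,b} = {y,z}" .
        then show "p \<in> {(y,z),(z,y)}" using p by (auto simp: doubleton_eq_iff)
      qed
    qed
    then show ?thesis using yz(3) by simp
  qed
  have "card P = (\<Sum>T\<in>f ` P. card {p\<in>P. f p = T})"
    using sum.image_gen[OF finP, of "\<lambda>_. 1::nat" f] by simp
  also have "\<dots> = (\<Sum>T\<in>f ` P. 2)" using fib by simp
  also have "\<dots> = 2 * card (f ` P)" by simp
  finally show ?thesis unfolding K3_degree_def img[symmetric] cardP by simp
qed



lemma adj_sym: "{a,b} \<in> E \<longleftrightarrow> {b,a} \<in> E" by (simp add: insert_commute)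

lemma nbr_iff: "u \<in> nbr V E v \<longleftrightarrow> u \<in> V \<and> {u,v} \<in> E" unfolding nbr_def by auto

lemma part:
  assumes sg: "simple_graph V E" and v: "v \<in> V" and x: "x \<in> nbr V E v"
  shows "nbr V E v = insert x ((nbr V E v \<inter> nbr V E x) \<union> {a\<in>nbr V E v. a \<noteq> x \<and> {x,a} \<notin> E})"
    and "x \<notin> (nbr V E v \<inter> nbr V E x) \<union> {a\<in>nbr V E v. a \<noteq> x \<and> {x,a} \<notin> E}"
    and "(nbr V E v \<inter> nbr V E x) \<inter> {a\<in>nbr V E v. a \<noteq> x \<and> {x,a} \<notin> E} = {}"
    and "card (nbr V E v) = Suc (card (nbr V E v \<inter> nbr V E x) + nd V E v x)"
proof -
  let ?N = "nbr V E v" and ?W = "nbr V E v \<inter> nbr V E x" and ?A = "{a\<in>nbr V E v. a \<noteq> x \<and> {x,a} \<notin> E}"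
  have xv: "{x,v} \<in> E" "x \<in> V" using x by (auto simp: nbr_iff)
  show e1: "?N = insert x (?W \<union> ?A)"
  proof (rule set_eqI)
    fix u
    show "u \<in> ?N \<longleftrightarrow> u \<in> insert x (?W \<union> ?A)"
    proof
      assume u: "u \<in> ?N"
      show "u \<in> insert x (?W \<union> ?A)"
      proof (cases "u = x \<or> {x,u} \<notin> E")
        case True then show ?thesis using u by blast
      next
        case False
        then have "{u,x} \<in> E" by (simp add: insert_commute)
        then have "u \<in> nbr V E x" using u by (simp add: nbr_iff)
        then show ?thesis using u by blast
      qed
    next
      assume u: "u \<in> insert x (?W \<union> ?A)"
      then show "u \<in> ?N" using x by blast
    qed
  qed
  show e2: "x \<notin> ?W \<union> ?A" using nbr_not_self[OF sg, of x] by blast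
  show e3: "?W \<inter> ?A = {}"
  proof -
    have "u \<notin> ?A" if "u \<in> nbr V E x" for u
    proof -
      have "{u,x} \<in> E" using that by (simp add: nbr_iff)
      then have "{x,u} \<in> E" by (simp add: insert_commute)
      then show ?thesis by blast
    qed
    then show ?thesis by blast
  qed
  have fin: "finite ?N" using fin_nbr[OF sg] .
  have finWA: "finite (?W \<union> ?A)" using fin by auto
  have c1: "card (insert x (?W \<union> ?A)) = Suc (card (?W \<union> ?A))"
    using card_insert_disjoint[OF finWA e2] .
  have c2: "card (?W \<union> ?A) = card ?W + card ?A"
    using e3 finWA by (intro card_Un_disjoint) auto
  have "card ?N = Suc (card ?W + card ?A)" using c1 c2 e1 by metis
  then show "card ?N = Suc (card ?W + nd V E v x)" unfolding nd_def by simp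
qed

lemma half:
  assumes sg: "simple_graph V E" and M: "(\<Sum>y\<in>nbr V E v. nd V E v y) = M"
    and v: "v \<in> V" and x: "x \<in> nbr V E v"
  defines "W \<equiv> nbr V E v \<inter> nbr V E x" and "A \<equiv> {a\<in>nbr V E v. a \<noteq> x \<and> {x,a} \<notin> E}"
  shows "2 * card A + (\<Sum>w\<in>W. card {w'\<in>W. w' \<noteq> w \<and> {w,w'} \<notin> E})
           + 2 * (\<Sum>w\<in>W. card {a\<in>A. {w,a} \<notin> E}) \<le> M"
proof -
  let ?N = "nbr V E v"
  have fin: "finite ?N" using fin_nbr[OF sg] .
  have e1: "?N = insert x (W \<union> A)" and e2: "x \<notin> W \<union> A" and e3: "W \<inter> A = {}"
    using part[OF sg v x] unfolding W_def A_def by auto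
  have finW: "finite W" and finA: "finite A" using fin e1 by (auto intro: finite_subset)
  have "M = nd V E v x + (\<Sum>y\<in>W \<union> A. nd V E v y)"
    using M e1 e2 fin by (simp add: sum.insert)
  also have "(\<Sum>y\<in>W \<union> A. nd V E v y) = (\<Sum>y\<in>W. nd V E v y) + (\<Sum>y\<in>A. nd V E v y)"
    using e3 finW finA by (simp add: sum.union_disjoint)
  finally have Msplit: "M = card A + (\<Sum>y\<in>W. nd V E v y) + (\<Sum>y\<in>A. nd V E v y)"
    unfolding nd_def A_def by simp
  have hw: "card {w'\<in>W. w' \<noteq> w \<and> {w,w'} \<notin> E} + card {a\<in>A. {w,a} \<notin> E} \<le> nd V E v w"
    if w: "w \<in> W" for w
  proof -
    have "card {w'\<in>W. w' \<noteq> w \<and> {w,w'} \<notin> E} + card {a\<in>A. {w,a} \<notin> E}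
        = card ({w'\<in>W. w' \<noteq> w \<and> {w,w'} \<notin> E} \<union> {a\<in>A. {w,a} \<notin> E})"
      using finW finA e3 by (intro card_Un_disjoint[symmetric]) auto
    also have "\<dots> \<le> card {z\<in>?N. z \<noteq> w \<and> {w,z} \<notin> E}"
    proof (rule card_mono)
      show "finite {z\<in>?N. z \<noteq> w \<and> {w,z} \<notin> E}" using fin by auto
      show "{w'\<in>W. w' \<noteq> w \<and> {w,w'} \<notin> E} \<union> {a\<in>A. {w,a} \<notin> E} \<subseteq> {z\<in>?N. z \<noteq> w \<and> {w,z} \<notin> E}"
        using e1 e3 w by auto
    qed
    finally show ?thesis unfolding nd_def .
  qed
  have ha: "card {w\<in>W. {a,w} \<notin> E} + 1 \<le> nd V E v a" if a: "a \<in> A" for a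
  proof -
    have "card {w\<in>W. {a,w} \<notin> E} + 1 = card (insert x {w\<in>W. {a,w} \<notin> E})"
      using finW e2 by simp
    also have "\<dots> \<le> card {z\<in>?N. z \<noteq> a \<and> {a,z} \<notin> E}"
    proof (rule card_mono)
      show "finite {z\<in>?N. z \<noteq> a \<and> {a,z} \<notin> E}" using fin by auto
      show "insert x {w\<in>W. {a,w} \<notin> E} \<subseteq> {z\<in>?N. z \<noteq> a \<and> {a,z} \<notin> E}"
        using e1 e3 a x unfolding A_def by (auto simp: adj_sym)
    qed
    finally show ?thesis unfolding nd_def .
  qed
  have swap: "(\<Sum>a\<in>A. card {w\<in>W. {a,w} \<notin> E}) = (\<Sum>w\<in>W. card {a\<in>A. {w,a} \<notin> E})"
  proof -
    have "(\<Sum>a\<in>A. card {w\<in>W. {a,w} \<notin> E}) = (\<Sum>a\<in>A. \<Sum>w\<in>{w. w\<in>W \<and> {a,w} \<notin> E}. (1::nat))"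
      by simp
    also have "\<dots> = (\<Sum>w\<in>W. \<Sum>a\<in>{a. a\<in>A \<and> {a,w} \<notin> E}. (1::nat))"
      by (rule sum.swap_restrict[OF finA finW])
    also have "\<dots> = (\<Sum>w\<in>W. card {a\<in>A. {w,a} \<notin> E})"
      by (simp add: adj_sym)
    finally show ?thesis .
  qed
  have s1: "(\<Sum>w\<in>W. card {w'\<in>W. w' \<noteq> w \<and> {w,w'} \<notin> E}) + (\<Sum>w\<in>W. card {a\<in>A. {w,a} \<notin> E})
      \<le> (\<Sum>y\<in>W. nd V E v y)"
    using hw by (simp add: sum.distrib[symmetric] sum_mono)
  have s2: "(\<Sum>a\<in>A. card {w\<in>W. {a,w} \<notin> E}) + card A \<le> (\<Sum>y\<in>A. nd V E v y)"
  proof -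
    have "(\<Sum>a\<in>A. card {w\<in>W. {a,w} \<notin> E} + 1) \<le> (\<Sum>y\<in>A. nd V E v y)"
      using ha by (rule sum_mono)
    then show ?thesis by (simp add: sum.distrib sum_Suc)
  qed
  show ?thesis using Msplit s1 s2 swap by linarith
qed



lemma nbr_swap: "x \<in> nbr V E v \<Longrightarrow> v \<in> V \<Longrightarrow> v \<in> nbr V E x \<and> x \<in> V"
  by (simp add: nbr_iff insert_commute)

lemma nd_sym:
  assumes sg: "simple_graph V E" and deg: "\<forall>u\<in>V. card (nbr V E u) = d"
    and v: "v \<in> V" and x: "x \<in> nbr V E v"
  shows "nd V E x v = nd V E v x"
proof -
  have vx: "v \<in> nbr V E x" and xV: "x \<in> V" using nbr_swap[OF x v] by auto
  have "card (nbr V E v) = Suc (card (nbr V E v \<inter> nbr V E x) + nd V E v x)"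
    using part(4)[OF sg v x] .
  moreover have "card (nbr V E x) = Suc (card (nbr V E x \<inter> nbr V E v) + nd V E x v)"
    using part(4)[OF sg xV vx] .
  moreover have "nbr V E x \<inter> nbr V E v = nbr V E v \<inter> nbr V E x" by blast
  ultimately show ?thesis using deg v xV by simp
qed

lemma key:
  assumes sg: "simple_graph V E" and deg: "\<forall>u\<in>V. card (nbr V E u) = d"
    and Msum: "\<forall>u\<in>V. (\<Sum>y\<in>nbr V E u. nd V E u y) = M"
    and v: "v \<in> V" and x: "x \<in> nbr V E v"
  shows "nd V E v x * (card (nbr V E v \<inter> nbr V E x) + 2) \<le> M"
proof -
  have vx: "v \<in> nbr V E x" and xV: "x \<in> V" using nbr_swap[OF x v] by auto
  define W where "W = nbr V E v \<inter> nbr V E x"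
  define A where "A = {a\<in>nbr V E v. a \<noteq> x \<and> {x,a} \<notin> E}"
  define Ox where "Ox = {a\<in>nbr V E x. a \<noteq> v \<and> {v,a} \<notin> E}"
  define k where "k = nd V E v x"
  have cA: "card A = k" unfolding A_def k_def nd_def ..
  have cO: "card Ox = k" unfolding Ox_def k_def using nd_sym[OF sg deg v x] unfolding nd_def by simp
  have finv: "finite (nbr V E v)" and finx: "finite (nbr V E x)" using fin_nbr[OF sg] by auto
  have finW: "finite W" and finA: "finite A" and finOx: "finite Ox"
    using finv finx unfolding W_def A_def Ox_def by auto
  have WI: "nbr V E x \<inter> nbr V E v = W" unfolding W_def by blast
  have h1: "2 * k + (\<Sum>w\<in>W. card {w'\<in>W. w' \<noteq> w \<and> {w,w'} \<notin> E})
           + 2 * (\<Sum>w\<in>W. card {a\<in>A. {w,a} \<notin> E}) \<le> M"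
    using half[OF sg _ v x, of M] Msum v unfolding W_def A_def k_def nd_def by simp
  have h2: "2 * k + (\<Sum>w\<in>W. card {w'\<in>W. w' \<noteq> w \<and> {w,w'} \<notin> E})
           + 2 * (\<Sum>w\<in>W. card {a\<in>Ox. {w,a} \<notin> E}) \<le> M"
    using half[OF sg _ xV vx, of M] Msum xV cO unfolding WI Ox_def by simp
  have cd: "d = Suc (card W + k)"
    using part(4)[OF sg v x] deg v unfolding W_def k_def by simp
  have vnW: "v \<notin> W" and xnW: "x \<notin> W" unfolding W_def using nbr_not_self[OF sg] by auto
  have vnA: "v \<notin> A" and xnA: "x \<notin> A" unfolding A_def using nbr_not_self[OF sg] by auto
  have vnO: "v \<notin> Ox" and xnO: "x \<notin> Ox" unfolding Ox_def using nbr_not_self[OF sg] by auto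
  have WA: "W \<inter> A = {}" using part(3)[OF sg v x] unfolding W_def A_def .
  have OnV: "Ox \<inter> nbr V E v = {}"
  proof -
    have "u \<notin> nbr V E v" if "u \<in> Ox" for u
    proof
      assume "u \<in> nbr V E v"
      then have "{u,v} \<in> E" by (simp add: nbr_iff)
      then have "{v,u} \<in> E" by (simp add: insert_commute)
      then show False using that unfolding Ox_def by blast
    qed
    then show ?thesis by blast
  qed
  have WO: "W \<inter> Ox = {}" using OnV unfolding W_def by blast
  have AO: "A \<inter> Ox = {}" using OnV unfolding A_def by blast
  have cl: "k \<le> card {a\<in>A. {w,a} \<notin> E} + card {a\<in>Ox. {w,a} \<notin> E} + card {w'\<in>W. w' \<noteq> w \<and> {w,w'} \<notin> E}"
    if w: "w \<in> W" for w
  proof -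
    have wv: "w \<in> nbr V E v" and wx: "w \<in> nbr V E x" using w unfolding W_def by auto
    have wV: "w \<in> V" using wv by (simp add: nbr_iff)
    have vw: "v \<in> nbr V E w" using nbr_swap[OF wv v] by auto
    have xw: "x \<in> nbr V E w" using nbr_swap[OF wx xV] by auto
    have wnw: "w \<notin> nbr V E w" using nbr_not_self[OF sg] .
    have finw: "finite (nbr V E w)" using fin_nbr[OF sg] .
    define SW where "SW = W \<inter> nbr V E w"
    define SA where "SA = A \<inter> nbr V E w"
    define SO where "SO = Ox \<inter> nbr V E w"
    have fins: "finite SW" "finite SA" "finite SO" unfolding SW_def SA_def SO_def using finW finA finOx by auto
    have u1: "card (SA \<union> SO) = card SA + card SO"
      using fins AO unfolding SA_def SO_def by (intro card_Un_disjoint) auto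
    have u2: "card (SW \<union> (SA \<union> SO)) = card SW + card (SA \<union> SO)"
      using fins WA WO unfolding SW_def SA_def SO_def by (intro card_Un_disjoint) auto
    have vx_ne: "v \<noteq> x" using x nbr_not_self[OF sg, of v] by auto
    have u3: "card ({v,x} \<union> (SW \<union> (SA \<union> SO))) = 2 + card (SW \<union> (SA \<union> SO))"
    proof -
      have "{v,x} \<inter> (SW \<union> (SA \<union> SO)) = {}"
        using vnW xnW vnA xnA vnO xnO unfolding SW_def SA_def SO_def by auto
      then have "card ({v,x} \<union> (SW \<union> (SA \<union> SO))) = card {v,x} + card (SW \<union> (SA \<union> SO))"
        using fins by (intro card_Un_disjoint) auto
      then show ?thesis using vx_ne by simp
    qed
    have u4: "card ({v,x} \<union> (SW \<union> (SA \<union> SO))) \<le> d"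
    proof -
      have "{v,x} \<union> (SW \<union> (SA \<union> SO)) \<subseteq> nbr V E w"
        using vw xw unfolding SW_def SA_def SO_def by auto
      then have "card ({v,x} \<union> (SW \<union> (SA \<union> SO))) \<le> card (nbr V E w)"
        using finw by (rule card_mono[rotated])
      then show ?thesis using deg wV by simp
    qed
    have eW: "card SW + card {w'\<in>W. w' \<noteq> w \<and> {w,w'} \<notin> E} + 1 = card W"
    proof -
      have "card {z\<in>W - {w}. {w,z} \<in> E} + card {z\<in>W - {w}. {w,z} \<notin> E} = card (W - {w})"
        using finW by (intro card_split) auto
      moreover have "{z\<in>W - {w}. {w,z} \<in> E} = SW"
        unfolding SW_def using wnw W_def by (auto simp: nbr_iff insert_commute)
      moreover have "{z\<in>W - {w}. {w,z} \<notin> E} = {w'\<in>W. w' \<noteq> w \<and> {w,w'} \<notin> E}" by auto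
      moreover have "card (W - {w}) + 1 = card W" using w finW
        by (metis One_nat_def Suc_pred add.right_neutral add_Suc_right card_Diff_singleton card_gt_0_iff empty_iff)
      ultimately show ?thesis by simp
    qed
    have eA: "card SA + card {a\<in>A. {w,a} \<notin> E} = k"
    proof -
      have "card {z\<in>A. {w,z} \<in> E} + card {z\<in>A. {w,z} \<notin> E} = card A"
        using finA by (intro card_split)
      moreover have "{z\<in>A. {w,z} \<in> E} = SA"
        unfolding SA_def A_def by (auto simp: nbr_iff insert_commute)
      ultimately show ?thesis using cA by simp
    qed
    have eO: "card SO + card {a\<in>Ox. {w,a} \<notin> E} = k"
    proof -
      have "card {z\<in>Ox. {w,z} \<in> E} + card {z\<in>Ox. {w,z} \<notin> E} = card Ox"
        using finOx by (intro card_split)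
      moreover have "{z\<in>Ox. {w,z} \<in> E} = SO"
        unfolding SO_def Ox_def by (auto simp: nbr_iff insert_commute)
      ultimately show ?thesis using cO by simp
    qed
    show ?thesis using u1 u2 u3 u4 eW eA eO cd by linarith
  qed
  have "(\<Sum>w\<in>W. k) \<le> (\<Sum>w\<in>W. card {a\<in>A. {w,a} \<notin> E} + card {a\<in>Ox. {w,a} \<notin> E} + card {w'\<in>W. w' \<noteq> w \<and> {w,w'} \<notin> E})"
    using cl by (rule sum_mono)
  then have s: "k * card W \<le> (\<Sum>w\<in>W. card {a\<in>A. {w,a} \<notin> E}) + (\<Sum>w\<in>W. card {a\<in>Ox. {w,a} \<notin> E}) + (\<Sum>w\<in>W. card {w'\<in>W. w' \<noteq> w \<and> {w,w'} \<notin> E})"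
    by (simp add: sum.distrib mult.commute)
  have "k * (card W + 2) = k * card W + 2 * k" by (simp add: algebra_simps)
  then have "k * (card W + 2) \<le> M" using s h1 h2 by linarith
  then show ?thesis unfolding k_def W_def .
qed



lemma two_choose2: "2 * (n choose 2) = n * (n - 1)"
proof -
  have "even (n * (n - 1))" by (cases "even n") auto
  then show ?thesis by (simp add: choose_two)
qed

lemma choose2_step: "0 < d \<Longrightarrow> d choose 2 = (d - 1) + ((d - 1) choose 2)"
  using choose_reduce_nat[of d 2] by simp

lemma deg_nbr: "degree V E u = card (nbr V E u)"
  unfolding degree_def nbr_def ..

lemma nd_le: "simple_graph V E \<Longrightarrow> nd V E v y \<le> card (nbr V E v)"
  unfolding nd_def using fin_nbr by (metis (no_types, lifting) card_mono mem_Collect_eq subsetI)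

lemma sum_nd:
  assumes sg: "simple_graph V E" and u: "u \<in> V" and deg: "card (nbr V E u) = d"
  shows "(\<Sum>y\<in>nbr V E u. nd V E u y) + 2 * K3_degree V E u = d * (d - 1)"
proof -
  let ?N = "nbr V E u"
  have fin: "finite ?N" using fin_nbr[OF sg] .
  have each: "card {z\<in>?N. z \<noteq> y \<and> {y,z} \<in> E} + nd V E u y = d - 1" if y: "y \<in> ?N" for y
  proof -
    have "card {z\<in>?N - {y}. {y,z} \<in> E} + card {z\<in>?N - {y}. {y,z} \<notin> E} = card (?N - {y})"
      using fin by (intro card_split) auto
    moreover have "{z\<in>?N - {y}. {y,z} \<in> E} = {z\<in>?N. z \<noteq> y \<and> {y,z} \<in> E}" by auto
    moreover have "{z\<in>?N - {y}. {y,z} \<notin> E} = {z\<in>?N. z \<noteq> y \<and> {y,z} \<notin> E}" by auto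
    moreover have "card (?N - {y}) = d - 1" using y fin deg by simp
    ultimately show ?thesis unfolding nd_def by simp
  qed
  have "(\<Sum>y\<in>?N. nd V E u y) + 2 * K3_degree V E u
      = (\<Sum>y\<in>?N. card {z\<in>?N. z \<noteq> y \<and> {y,z} \<in> E} + nd V E u y)"
    using tri_count[OF sg u] by (simp add: sum.distrib)
  also have "\<dots> = (\<Sum>y\<in>?N. d - 1)" using each by simp
  also have "\<dots> = d * (d - 1)" using deg by simp
  finally show ?thesis .
qed

lemma part1:
  fixes V :: "'a set"
  assumes d3: "r2 \<ge> 3" and odd: "odd r2" and lo: "(r2 - 1) choose 2 < r3" and hi: "r3 < r2 choose 2"
    and ne: "V \<noteq> {}"
  shows "\<not> has_params V E r2 r3"
proof
  assume hp: "has_params V E r2 r3"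
  have sg: "simple_graph V E" using hp unfolding has_params_def by blast
  have deg: "\<forall>u\<in>V. card (nbr V E u) = r2" and K3: "\<forall>u\<in>V. K3_degree V E u = r3"
    using hp unfolding has_params_def deg_nbr by auto
  define M where "M = 2 * (r2 choose 2) - 2 * r3"
  have cs: "r2 choose 2 = (r2 - 1) + ((r2 - 1) choose 2)" using choose2_step[of r2] d3 by simp
  have Mlt: "M < 2 * (r2 - 1)" and Mpos: "0 < M" and Mev: "even M"
    using lo hi cs unfolding M_def by auto
  have Msum: "\<forall>u\<in>V. (\<Sum>y\<in>nbr V E u. nd V E u y) = M"
  proof
    fix u assume u: "u \<in> V"
    have "(\<Sum>y\<in>nbr V E u. nd V E u y) + 2 * r3 = r2 * (r2 - 1)"
      using sum_nd[OF sg u] deg K3 u by simp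
    then show "(\<Sum>y\<in>nbr V E u. nd V E u y) = M"
      unfolding M_def two_choose2 by simp
  qed
  have ndle: "nd V E v x \<le> 1" if v: "v \<in> V" and x: "x \<in> nbr V E v" for v x
  proof (rule ccontr)
    assume "\<not> nd V E v x \<le> 1"
    then obtain j where j: "nd V E v x = j + 2" by (metis add.commute le_Suc_ex not_less_eq_eq one_add_one plus_1_eq_Suc)
    define c where "c = card (nbr V E v \<inter> nbr V E x)"
    have k: "nd V E v x * (c + 2) \<le> M" using key[OF sg deg Msum v x] unfolding c_def .
    have cd: "r2 = Suc (c + nd V E v x)" using part(4)[OF sg v x] deg v unfolding c_def by simp
    have "(j + 2) * (c + 2) = j * c + 2 * j + 2 * c + 4" by (simp add: algebra_simps)
    then show False using k cd Mlt j by simp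
  qed
  obtain v where v: "v \<in> V" using ne by blast
  let ?N = "nbr V E v"
  have fin: "finite ?N" using fin_nbr[OF sg] .
  have sv: "(\<Sum>y\<in>?N. nd V E v y) = M" using Msum v by blast
  obtain y where y: "y \<in> ?N" "nd V E v y = 0"
  proof (rule ccontr)
    assume "\<not> thesis"
    then have "\<forall>y\<in>?N. nd V E v y = 1" using that ndle[OF v] by (metis le_neq_implies_less less_one)
    then have "(\<Sum>y\<in>?N. nd V E v y) = card ?N" by simp
    then have "M = r2" using sv deg v by simp
    then show False using Mev odd by simp
  qed
  obtain x where x: "x \<in> ?N" "nd V E v x = 1"
  proof (rule ccontr)
    assume "\<not> thesis"
    then have "\<forall>y\<in>?N. nd V E v y = 0" using that ndle[OF v] by (metis le_neq_implies_less less_one)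
    then have "(\<Sum>y\<in>?N. nd V E v y) = 0" by simp
    then show False using sv Mpos by simp
  qed
  have xV: "x \<in> V" and vx: "v \<in> nbr V E x" using nbr_swap[OF x(1) v] by auto
  have "nd V E x v = 1" using nd_sym[OF sg deg v x(1)] x(2) by simp
  then have "card {z\<in>nbr V E x. z \<noteq> v \<and> {v,z} \<notin> E} = 1" unfolding nd_def .
  then obtain q where qe: "{z\<in>nbr V E x. z \<noteq> v \<and> {v,z} \<notin> E} = {q}"
    by (rule card_1_singletonE)
  have "q \<in> {z\<in>nbr V E x. z \<noteq> v \<and> {v,z} \<notin> E}" unfolding qe by simp
  then have q: "q \<in> nbr V E x" "q \<noteq> v" "{v,q} \<notin> E" by auto
  have qN: "q \<notin> ?N"
  proof
    assume "q \<in> ?N"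
    then have "{q,v} \<in> E" by (simp add: nbr_iff)
    then show False using q(3) by (simp add: insert_commute)
  qed
  have yV: "y \<in> V" using y(1) by (simp add: nbr_iff)
  have vnN: "v \<notin> ?N" using nbr_not_self[OF sg] .
  have yempty: "{z\<in>?N. z \<noteq> y \<and> {y,z} \<notin> E} = {}"
    using y(2) fin unfolding nd_def by simp
  have sub: "insert v (?N - {y}) \<subseteq> nbr V E y"
  proof
    fix z assume z: "z \<in> insert v (?N - {y})"
    show "z \<in> nbr V E y"
    proof (cases "z = v")
      case True then show ?thesis using nbr_swap[OF y(1) v] by simp
    next
      case False
      then have zN: "z \<in> ?N" "z \<noteq> y" using z by auto
      then have "{y,z} \<in> E" using yempty by blast
      then show ?thesis using zN by (simp add: nbr_iff insert_commute)
    qed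
  qed
  have "card (insert v (?N - {y})) = r2"
    using fin vnN y(1) deg v d3 by (simp add: card_insert_if)
  moreover have "card (nbr V E y) = r2" using deg yV by simp
  ultimately have eqy: "insert v (?N - {y}) = nbr V E y"
    using sub fin_nbr[OF sg] by (metis card_subset_eq)
  have yq: "{q,y} \<notin> E"
  proof
    assume "{q,y} \<in> E"
    moreover have "q \<in> V" using q(1) by (simp add: nbr_iff)
    ultimately have "q \<in> nbr V E y" by (simp add: nbr_iff)
    then show False using eqy q(2) qN by auto
  qed
  have yx: "y \<noteq> x" using x(2) y(2) by auto
  have "{y,x} \<in> E" using yempty x(1) yx by blast
  then have yNx: "y \<in> nbr V E x" using yV by (simp add: nbr_iff insert_commute)
  have "{v,y} \<subseteq> {z\<in>nbr V E x. z \<noteq> q \<and> {q,z} \<notin> E}"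
    using vx yNx q yq y(1) qN by (auto simp: insert_commute)
  then have "card {v,y} \<le> nd V E x q"
    unfolding nd_def using fin_nbr[OF sg] by (intro card_mono) auto
  moreover have "card {v,y} = 2" using y(1) vnN by (cases "v = y") auto
  moreover have "nd V E x q \<le> 1" using ndle[OF xV q(1)] .
  ultimately show False by simp
qed



lemma KE_iff: "{a,b} \<in> complete_graph_E n \<longleftrightarrow> a < n \<and> b < n \<and> a \<noteq> b"
  unfolding complete_graph_E_def by (auto simp: doubleton_eq_iff)

lemma K_sg: "simple_graph (complete_graph_V n) (complete_graph_E n)"
  unfolding simple_graph_def complete_graph_V_def complete_graph_E_def by auto

lemma K3_via_nd:
  assumes sg: "simple_graph V E" and u: "u \<in> V" and deg: "card (nbr V E u) = d"
  shows "2 * K3_degree V E u = d * (d - 1) - (\<Sum>y\<in>nbr V E u. nd V E u y)"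
  using sum_nd[OF sg u deg] by simp

lemma part2:
  assumes "r2 \<ge> 3"
  shows "has_params (complete_graph_V (r2 + 1)) (complete_graph_E (r2 + 1)) r2 (r2 choose 2)"
proof -
  let ?V = "complete_graph_V (r2 + 1)" and ?E = "complete_graph_E (r2 + 1)"
  have sg: "simple_graph ?V ?E" by (rule K_sg)
  have nb: "nbr ?V ?E u = ?V - {u}" if "u \<in> ?V" for u
    using that unfolding nbr_def by (auto simp: KE_iff complete_graph_V_def)
  have dg: "card (nbr ?V ?E u) = r2" if u: "u \<in> ?V" for u
    using nb[OF u] u by (simp add: complete_graph_V_def)
  have nd0: "nd ?V ?E u y = 0" if u: "u \<in> ?V" and y: "y \<in> nbr ?V ?E u" for u y
  proof -
    have e: "{z\<in>nbr ?V ?E u. z \<noteq> y \<and> {y,z} \<notin> ?E} = {}"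
      using nb[OF u] y by (auto simp: KE_iff complete_graph_V_def)
    show ?thesis unfolding nd_def e by simp
  qed
  have "K3_degree ?V ?E u = r2 choose 2" if u: "u \<in> ?V" for u
  proof -
    have "2 * K3_degree ?V ?E u = r2 * (r2 - 1)"
      using K3_via_nd[OF sg u dg[OF u]] nd0[OF u] by simp
    then show ?thesis using two_choose2[of r2] by simp
  qed
  then show ?thesis unfolding has_params_def deg_nbr using sg dg by auto
qed

lemma CE_iff:
  "{(a,b),(c,e)} \<in> cart_E (complete_graph_V r) (complete_graph_E r) (complete_graph_V 2) (complete_graph_E 2)
   \<longleftrightarrow> a < r \<and> c < r \<and> b < 2 \<and> e < 2 \<and> ((a = c \<and> b \<noteq> e) \<or> (b = e \<and> a \<noteq> c))"
  (is "?L \<longleftrightarrow> ?R")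
proof
  assume L: ?L
  have "(\<exists>u v v'. {(a,b),(c,e)} = {(u,v),(u,v')} \<and> u \<in> complete_graph_V r \<and> {v,v'} \<in> complete_graph_E 2)
      \<or> (\<exists>u u' v. {(a,b),(c,e)} = {(u,v),(u',v)} \<and> v \<in> complete_graph_V 2 \<and> {u,u'} \<in> complete_graph_E r)"
    using L unfolding cart_E_def by blast
  then show ?R
  proof
    assume "\<exists>u v v'. {(a,b),(c,e)} = {(u,v),(u,v')} \<and> u \<in> complete_graph_V r \<and> {v,v'} \<in> complete_graph_E 2"
    then obtain u v v' where h: "{(a,b),(c,e)} = {(u,v),(u,v')}" "u < r" "v < 2" "v' < 2" "v \<noteq> v'"
      unfolding complete_graph_V_def KE_iff by auto
    from h(1) have "((a,b) = (u,v) \<and> (c,e) = (u,v')) \<or> ((a,b) = (u,v') \<and> (c,e) = (u,v))"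
      by (simp only: doubleton_eq_iff)
    then show ?R using h by auto
  next
    assume "\<exists>u u' v. {(a,b),(c,e)} = {(u,v),(u',v)} \<and> v \<in> complete_graph_V 2 \<and> {u,u'} \<in> complete_graph_E r"
    then obtain u u' v where h: "{(a,b),(c,e)} = {(u,v),(u',v)}" "v < 2" "u < r" "u' < r" "u \<noteq> u'"
      unfolding complete_graph_V_def KE_iff by auto
    from h(1) have "((a,b) = (u,v) \<and> (c,e) = (u',v)) \<or> ((a,b) = (u',v) \<and> (c,e) = (u,v))"
      by (simp only: doubleton_eq_iff)
    then show ?R using h by auto
  qed
next
  assume R: ?R
  show ?L
  proof (cases "a = c")
    case True
    then have "b \<noteq> e" using R by auto
    then have "{b,e} \<in> complete_graph_E 2" using R by (simp add: KE_iff)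
    moreover have "a \<in> complete_graph_V r" using R unfolding complete_graph_V_def by simp
    moreover have "{(a,b),(c,e)} = {(a,b),(a,e)}" using True by simp
    ultimately have "\<exists>u v v'. {(a,b),(c,e)} = {(u,v),(u,v')} \<and> u \<in> complete_graph_V r \<and> {v,v'} \<in> complete_graph_E 2"
      by (intro exI[of _ a] exI[of _ b] exI[of _ e]) simp
    then show ?thesis unfolding cart_E_def Un_iff mem_Collect_eq by (rule disjI1)
  next
    case False
    then have "b = e" using R by auto
    have "{a,c} \<in> complete_graph_E r" using R False by (simp add: KE_iff)
    moreover have "b \<in> complete_graph_V 2" using R unfolding complete_graph_V_def by simp
    moreover have "{(a,b),(c,e)} = {(a,b),(c,b)}" using \<open>b = e\<close> by simp
    ultimately have "\<exists>u u' v. {(a,b),(c,e)} = {(u,v),(u',v)} \<and> v \<in> complete_graph_V 2 \<and> {u,u'} \<in> complete_graph_E r"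
      by (intro exI[of _ a] exI[of _ c] exI[of _ b]) simp
    then show ?thesis unfolding cart_E_def Un_iff mem_Collect_eq by (rule disjI2)
  qed
qed



lemma part3:
  assumes r3: "r \<ge> 3"
  shows "has_params (cart_V (complete_graph_V r) (complete_graph_V 2))
                    (cart_E (complete_graph_V r) (complete_graph_E r)
                            (complete_graph_V 2) (complete_graph_E 2))
                    r ((r - 1) choose 2)"
proof -
  define V3 where "V3 = cart_V (complete_graph_V r) (complete_graph_V 2)"
  define E3 where "E3 = cart_E (complete_graph_V r) (complete_graph_E r) (complete_graph_V 2) (complete_graph_E 2)"
  have V3e: "V3 = {0..<r} \<times> {0..<2}" unfolding V3_def cart_V_def complete_graph_V_def ..
  have CE: "{(a,b),(c,e)} \<in> E3 \<longleftrightarrow> a < r \<and> c < r \<and> b < 2 \<and> e < 2 \<and> ((a = c \<and> b \<noteq> e) \<or> (b = e \<and> a \<noteq> c))"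
    for a b c e unfolding E3_def by (rule CE_iff)
  have sg: "simple_graph V3 E3"
    unfolding simple_graph_def
  proof (rule conjI, rule_tac [2] ballI)
    show "finite V3" unfolding V3e by simp
    fix x assume x: "x \<in> E3"
    then have "(\<exists>u v v'. x = {(u,v),(u,v')} \<and> u \<in> complete_graph_V r \<and> {v,v'} \<in> complete_graph_E 2)
      \<or> (\<exists>u u' v. x = {(u,v),(u',v)} \<and> v \<in> complete_graph_V 2 \<and> {u,u'} \<in> complete_graph_E r)"
      unfolding E3_def cart_E_def Un_iff mem_Collect_eq .
    then show "x \<subseteq> V3 \<and> card x = 2"
    proof
      assume "\<exists>u v v'. x = {(u,v),(u,v')} \<and> u \<in> complete_graph_V r \<and> {v,v'} \<in> complete_graph_E 2"
      then obtain u v v' where h: "x = {(u,v),(u,v')}" "u < r" "v < 2" "v' < 2" "v \<noteq> v'"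
        unfolding complete_graph_V_def KE_iff by auto
      then show ?thesis unfolding V3e by auto
    next
      assume "\<exists>u u' v. x = {(u,v),(u',v)} \<and> v \<in> complete_graph_V 2 \<and> {u,u'} \<in> complete_graph_E r"
      then obtain u u' v where h: "x = {(u,v),(u',v)}" "v < 2" "u < r" "u' < r" "u \<noteq> u'"
        unfolding complete_graph_V_def KE_iff by auto
      then show ?thesis unfolding V3e by auto
    qed
  qed
  have main: "card (nbr V3 E3 p) = r \<and> K3_degree V3 E3 p = (r - 1) choose 2" if p: "p \<in> V3" for p
  proof -
    obtain i j where pij: "p = (i,j)" and i: "i < r" and j: "j < 2" using p unfolding V3e by auto
    define R where "R = (\<lambda>i'. (i',j)) ` ({0..<r} - {i})"
    define s where "s = (i, 1 - j)"
    have nb: "nbr V3 E3 p = insert s R"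
    proof (rule set_eqI)
      fix z :: "nat \<times> nat"
      obtain a b where z: "z = (a,b)" by (cases z)
      have "z \<in> nbr V3 E3 p \<longleftrightarrow> a < r \<and> b < 2 \<and> ((a = i \<and> b \<noteq> j) \<or> (b = j \<and> a \<noteq> i))"
        unfolding nbr_iff z pij CE V3e using i j by auto
      also have "\<dots> \<longleftrightarrow> z \<in> insert s R"
        unfolding z s_def R_def using i j by (cases "j = 0") auto
      finally show "z \<in> nbr V3 E3 p \<longleftrightarrow> z \<in> insert s R" .
    qed
    have sR: "s \<notin> R" unfolding s_def R_def using j by (cases "j = 0") auto
    have finR: "finite R" unfolding R_def by simp
    have cR: "card R = r - 1"
    proof -
      have "inj_on (\<lambda>i'. (i',j)) ({0..<r} - {i})" by (auto simp: inj_on_def)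
      then have "card R = card ({0..<r} - {i})" unfolding R_def by (rule card_image)
      then show ?thesis using i by simp
    qed
    have cN: "card (nbr V3 E3 p) = r" using nb sR finR cR r3 by simp
    have nds: "nd V3 E3 p s = r - 1"
    proof -
      have "{z\<in>nbr V3 E3 p. z \<noteq> s \<and> {s,z} \<notin> E3} = R"
        unfolding nb using j by (cases "j = 0") (auto simp: s_def R_def CE)
      then show ?thesis unfolding nd_def using cR by simp
    qed
    have ndR: "nd V3 E3 p y = 1" if y: "y \<in> R" for y
    proof -
      obtain i' where y0: "i' \<in> {0..<r} - {i}" "y = (i',j)" using y unfolding R_def by blast
      then have y': "y = (i',j)" "i' < r" "i' \<noteq> i" by auto
      have "{z\<in>nbr V3 E3 p. z \<noteq> y \<and> {y,z} \<notin> E3} = {s}"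
      proof (rule set_eqI)
        fix z :: "nat \<times> nat"
        show "z \<in> {z\<in>nbr V3 E3 p. z \<noteq> y \<and> {y,z} \<notin> E3} \<longleftrightarrow> z \<in> {s}"
        proof
          assume "z \<in> {z\<in>nbr V3 E3 p. z \<noteq> y \<and> {y,z} \<notin> E3}"
          then have zz: "z \<in> insert s R" "z \<noteq> y" "{y,z} \<notin> E3" unfolding nb by auto
          show "z \<in> {s}"
          proof (rule ccontr)
            assume "z \<notin> {s}"
            then have "z \<in> R" using zz by auto
            then obtain i'' where "z = (i'',j)" "i'' < r" by (auto simp: R_def)
            then show False using zz y' j by (auto simp: CE)
          qed
        next
          assume "z \<in> {s}"
          then show "z \<in> {z\<in>nbr V3 E3 p. z \<noteq> y \<and> {y,z} \<notin> E3}"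
            unfolding nb using y' j by (cases "j = 0") (auto simp: s_def CE)
        qed
      qed
      then show ?thesis unfolding nd_def by simp
    qed
    have "(\<Sum>y\<in>nbr V3 E3 p. nd V3 E3 p y) = nd V3 E3 p s + (\<Sum>y\<in>R. nd V3 E3 p y)"
      unfolding nb using sR finR by (simp add: sum.insert)
    also have "\<dots> = (r - 1) + (r - 1)" using nds ndR cR by simp
    finally have S: "(\<Sum>y\<in>nbr V3 E3 p. nd V3 E3 p y) = 2 * (r - 1)" by simp
    have "2 * K3_degree V3 E3 p = r * (r - 1) - 2 * (r - 1)"
      using K3_via_nd[OF sg p cN] S by simp
    also have "\<dots> = (r - 1) * (r - 1 - 1)"
    proof -
      obtain t where "r = Suc (Suc t)" using r3 by (metis add_2_eq_Suc le_Suc_ex numeral_3_eq_3 le_add1 le_trans Suc_leD)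
      then show ?thesis by (simp add: algebra_simps)
    qed
    also have "\<dots> = 2 * ((r - 1) choose 2)" using two_choose2[of "r - 1"] by simp
    finally have "K3_degree V3 E3 p = (r - 1) choose 2" by simp
    then show ?thesis using cN by simp
  qed
  show ?thesis unfolding V3_def[symmetric] E3_def[symmetric] has_params_def deg_nbr
    using sg main by auto
qed


theorem corollary5p2:
  fixes r2 :: nat
  assumes "r2 \<ge> 3" and "odd r2"
  shows "(\<forall>(V :: 'a set) E (r3 :: nat). (r2 - 1) choose 2 < r3 \<and> r3 < r2 choose 2
            \<and> V \<noteq> {} \<longrightarrow> \<not> has_params V E r2 r3)
       \<and> has_params (complete_graph_V (r2 + 1)) (complete_graph_E (r2 + 1)) r2 (r2 choose 2)
       \<and> has_params (cart_V (complete_graph_V r2) (complete_graph_V 2))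
                    (cart_E (complete_graph_V r2) (complete_graph_E r2)
                            (complete_graph_V 2) (complete_graph_E 2))
                    r2 ((r2 - 1) choose 2)"
proof (intro conjI)
  show "\<forall>(V :: 'a set) E (r3 :: nat). (r2 - 1) choose 2 < r3 \<and> r3 < r2 choose 2
            \<and> V \<noteq> {} \<longrightarrow> \<not> has_params V E r2 r3"
  proof (intro allI impI)
    fix V :: "'a set" and E :: "'a set set" and r3 :: nat
    assume h: "(r2 - 1) choose 2 < r3 \<and> r3 < r2 choose 2 \<and> V \<noteq> {}"
    show "\<not> has_params V E r2 r3"
      using h by (intro part1[OF assms]) auto
  qed
  show "has_params (complete_graph_V (r2 + 1)) (complete_graph_E (r2 + 1)) r2 (r2 choose 2)"
    using part2[OF assms(1)] .
  show "has_params (cart_V (complete_graph_V r2) (complete_graph_V 2))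
                    (cart_E (complete_graph_V r2) (complete_graph_E r2)
                            (complete_graph_V 2) (complete_graph_E 2))
                    r2 ((r2 - 1) choose 2)"
    using part3[OF assms(1)] .
qed

end
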